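(* Every $\lambda^\star$-practical number is $\lambda$-practical.
   Context: $\lambda$ is the Carmichael function ($\lambda(n)$ is the least positive integer $m$ with $a^m\equiv1\pmod n$ for all $a$ coprime to $n$) and $\varphi$ is Euler's totient. A positive integer $n$ is $\lambda^\star$-practical if every positive integer $m\le\sum_{d\mid n}\lambda(d)$ can be written as $\sum_{d\in\mathcal{D}}\lambda(d)$ for some set $\mathcal{D}$ of distinct positive divisors of $n$. A positive integer $n$ is $\lambda$-practical if every integer $m$ with $1\le m\le n$ can be written as $m=\sum_{d\mid n}\lambda(d)m_d$ with integers $0\le m_d\le \varphi(d)/\lambda(d)$. *)

theory Defs
  imports "HOL-Number_Theory.Number_Theory"
begin

definition carmichael :: "nat \<Rightarrow> nat" where
  "carmichael n = (LEAST m. m > 0 \<and> (\<forall>a::nat. coprime a n \<longrightarrow> [a ^ m = 1] (mod n)))"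

definition lambda_star_practical :: "nat \<Rightarrow> bool" where
  "lambda_star_practical n \<longleftrightarrow> n > 0 \<and>
     (\<forall>m::nat. 1 \<le> m \<and> m \<le> (\<Sum>d\<in>{d. d dvd n}. carmichael d) \<longrightarrow>
        (\<exists>D. D \<subseteq> {d. d dvd n} \<and> m = (\<Sum>d\<in>D. carmichael d)))"

definition lambda_practical :: "nat \<Rightarrow> bool" where
  "lambda_practical n \<longleftrightarrow> n > 0 \<and>
     (\<forall>m::nat. 1 \<le> m \<and> m \<le> n \<longrightarrow>
        (\<exists>c::nat \<Rightarrow> nat. (\<forall>d. d dvd n \<longrightarrow> c d \<le> totient d div carmichael d) \<and>
            m = (\<Sum>d\<in>{d. d dvd n}. carmichael d * c d)))"

end

theory Submission
  imports Defs
begin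

lemma carm_prop:
  assumes "d > 0"
  shows "carmichael d > 0 \<and> (\<forall>a::nat. coprime a d \<longrightarrow> [a ^ carmichael d = 1] (mod d))"
proof -
  have ex: "totient d > 0 \<and> (\<forall>a::nat. coprime a d \<longrightarrow> [a ^ totient d = 1] (mod d))"
    using assms euler_theorem by auto
  show ?thesis unfolding carmichael_def by (rule LeastI[of _ "totient d"]) (rule ex)
qed

lemma carm_dvd:
  assumes "d > 0"
  shows "carmichael d dvd totient d"
proof -
  let ?L = "carmichael d"
  have L: "?L > 0" "\<And>a. coprime a d \<Longrightarrow> [a ^ ?L = 1] (mod d)" using carm_prop[OF assms] by auto
  define r where "r = totient d mod ?L"
  define q where "q = totient d div ?L"
  have tq: "totient d = ?L * q + r" unfolding r_def q_def by simp
  have rr: "[a ^ r = 1] (mod d)" if "coprime a d" for a :: nat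
  proof -
    have "[a ^ totient d = 1] (mod d)" using euler_theorem that by blast
    moreover have "a ^ totient d = (a ^ ?L) ^ q * a ^ r" by (simp add: tq power_add power_mult)
    moreover have "[(a ^ ?L) ^ q * a ^ r = 1 ^ q * a ^ r] (mod d)"
      by (intro cong_mult cong_pow L(2) that cong_refl)
    ultimately show ?thesis by (metis cong_sym cong_trans power_one mult_1)
  qed
  have "r = 0"
  proof (rule ccontr)
    assume "r \<noteq> 0"
    hence "r > 0 \<and> (\<forall>a::nat. coprime a d \<longrightarrow> [a ^ r = 1] (mod d))" using rr by auto
    hence "?L \<le> r" unfolding carmichael_def by (rule Least_le)
    moreover have "r < ?L" unfolding r_def using L(1) by simp
    ultimately show False by simp
  qed
  thus ?thesis unfolding r_def by auto
qed

lemma main_ind: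
  assumes n: "n > 0"
    and star: "\<And>m. m \<le> (\<Sum>d\<in>{d. d dvd n}. carmichael d) \<Longrightarrow>
        (\<exists>D. D \<subseteq> {d. d dvd n} \<and> m = (\<Sum>d\<in>D. carmichael d))"
  shows "\<forall>b. (\<Sum>d\<in>{d. d dvd n}. b d - 1) = k \<longrightarrow> (\<forall>d. d dvd n \<longrightarrow> 1 \<le> b d) \<longrightarrow>
     (\<forall>m. m \<le> (\<Sum>d\<in>{d. d dvd n}. carmichael d * b d) \<longrightarrow>
        (\<exists>c::nat \<Rightarrow> nat. (\<forall>d. d dvd n \<longrightarrow> c d \<le> b d) \<and>
            m = (\<Sum>d\<in>{d. d dvd n}. carmichael d * c d)))"
proof (induction k)
  case 0
  have fin: "finite {d. d dvd n}" using n by simp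
  show ?case
  proof (intro allI impI)
    fix b m
    assume h: "(\<Sum>d\<in>{d. d dvd n}. b d - 1) = 0" "\<forall>d. d dvd n \<longrightarrow> 1 \<le> b d"
      and m: "m \<le> (\<Sum>d\<in>{d. d dvd n}. carmichael d * b d)"
    have b1: "b d = 1" if "d dvd n" for d
    proof -
      have "b d - 1 = 0" using h(1) fin that by (simp add: sum_eq_0_iff)
      thus ?thesis using h(2) that by (simp add: le_antisym)
    qed
    have "(\<Sum>d\<in>{d. d dvd n}. carmichael d * b d) = (\<Sum>d\<in>{d. d dvd n}. carmichael d)"
      by (rule sum.cong) (auto simp: b1)
    then obtain D where D: "D \<subseteq> {d. d dvd n}" "m = (\<Sum>d\<in>D. carmichael d)" using star m by auto
    define c where "c d = (if d \<in> D then 1 else (0::nat))" for d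
    have "(\<Sum>d\<in>{d. d dvd n}. carmichael d * c d) = (\<Sum>d\<in>{d. d dvd n}. if d \<in> D then carmichael d else 0)"
      by (rule sum.cong) (auto simp: c_def)
    also have "\<dots> = (\<Sum>d\<in>{d. d dvd n} \<inter> D. carmichael d)"
      using fin by (simp add: sum.inter_restrict)
    also have "{d. d dvd n} \<inter> D = D" using D by auto
    finally have "m = (\<Sum>d\<in>{d. d dvd n}. carmichael d * c d)" using D by simp
    moreover have "\<forall>d. d dvd n \<longrightarrow> c d \<le> b d" using b1 by (auto simp: c_def)
    ultimately show "\<exists>c::nat \<Rightarrow> nat. (\<forall>d. d dvd n \<longrightarrow> c d \<le> b d) \<and>
            m = (\<Sum>d\<in>{d. d dvd n}. carmichael d * c d)" by blast
  qed
next
  case (Suc k)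
  have fin: "finite {d. d dvd n}" using n by simp
  show ?case
  proof (intro allI impI)
    fix b m
    assume h: "(\<Sum>d\<in>{d. d dvd n}. b d - 1) = Suc k" "\<forall>d. d dvd n \<longrightarrow> 1 \<le> b d"
      and m: "m \<le> (\<Sum>d\<in>{d. d dvd n}. carmichael d * b d)"
    obtain d0 where d0: "d0 dvd n" "b d0 \<ge> 2"
    proof -
      have "\<exists>d\<in>{d. d dvd n}. b d - 1 \<noteq> 0"
        using h(1) by (metis (mono_tags, lifting) nat.distinct(1) sum.neutral)
      thus ?thesis using that by force
    qed
    define b' where "b' = b(d0 := b d0 - 1)"
    have s1: "(\<Sum>d\<in>{d. d dvd n}. b d - 1) = (b d0 - 1) + (\<Sum>d\<in>{d. d dvd n} - {d0}. b d - 1)"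
      using fin d0 by (simp add: sum.remove)
    have s2: "(\<Sum>d\<in>{d. d dvd n}. b' d - 1) = (b' d0 - 1) + (\<Sum>d\<in>{d. d dvd n} - {d0}. b' d - 1)"
      using fin d0 by (simp add: sum.remove)
    have s3: "(\<Sum>d\<in>{d. d dvd n} - {d0}. b' d - 1) = (\<Sum>d\<in>{d. d dvd n} - {d0}. b d - 1)"
      by (rule sum.cong) (auto simp: b'_def)
    have kk: "(\<Sum>d\<in>{d. d dvd n}. b' d - 1) = k" using s1 s2 s3 h(1) d0 by (simp add: b'_def)
    have b'1: "\<forall>d. d dvd n \<longrightarrow> 1 \<le> b' d" using h(2) d0 by (auto simp: b'_def)
    have IH: "\<And>m. m \<le> (\<Sum>d\<in>{d. d dvd n}. carmichael d * b' d) \<Longrightarrow>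
        (\<exists>c::nat \<Rightarrow> nat. (\<forall>d. d dvd n \<longrightarrow> c d \<le> b' d) \<and>
            m = (\<Sum>d\<in>{d. d dvd n}. carmichael d * c d))"
      using Suc.IH kk b'1 by blast
    define T' where "T' = (\<Sum>d\<in>{d. d dvd n}. carmichael d * b' d)"
    have t1: "(\<Sum>d\<in>{d. d dvd n}. carmichael d * b d) = carmichael d0 * b d0 + (\<Sum>d\<in>{d. d dvd n} - {d0}. carmichael d * b d)"
      using fin d0 by (simp add: sum.remove)
    have t2: "T' = carmichael d0 * b' d0 + (\<Sum>d\<in>{d. d dvd n} - {d0}. carmichael d * b' d)"
      unfolding T'_def using fin d0 by (simp add: sum.remove)
    have t3: "(\<Sum>d\<in>{d. d dvd n} - {d0}. carmichael d * b' d) = (\<Sum>d\<in>{d. d dvd n} - {d0}. carmichael d * b d)"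
      by (rule sum.cong) (auto simp: b'_def)
    have bd: "b d0 = b' d0 + 1" using d0 by (simp add: b'_def)
    have Teq: "(\<Sum>d\<in>{d. d dvd n}. carmichael d * b d) = T' + carmichael d0"
      using t1 t2 t3 bd by (simp add: algebra_simps)
    have Tge: "T' \<ge> carmichael d0"
    proof -
      have "carmichael d0 \<le> carmichael d0 * b' d0" using b'1 d0 by simp
      thus ?thesis using t2 by linarith
    qed
    show "\<exists>c::nat \<Rightarrow> nat. (\<forall>d. d dvd n \<longrightarrow> c d \<le> b d) \<and>
            m = (\<Sum>d\<in>{d. d dvd n}. carmichael d * c d)"
    proof (cases "m \<le> T'")
      case True
      obtain c where c: "\<forall>d. d dvd n \<longrightarrow> c d \<le> b' d" "m = (\<Sum>d\<in>{d. d dvd n}. carmichael d * c d)"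
        using IH[OF True[unfolded T'_def]] by (elim exE conjE) (rule that)
      have bb: "b' d \<le> b d" for d unfolding b'_def by simp
      have "\<forall>d. d dvd n \<longrightarrow> c d \<le> b d" using c(1) bb le_trans by blast
      thus ?thesis using c(2) by blast
    next
      case False
      hence mle: "m - carmichael d0 \<le> T'" using m Teq by linarith
      obtain c where c: "\<forall>d. d dvd n \<longrightarrow> c d \<le> b' d" "m - carmichael d0 = (\<Sum>d\<in>{d. d dvd n}. carmichael d * c d)"
        using IH[OF mle[unfolded T'_def]] by (elim exE conjE) (rule that)
      define c' where "c' = c(d0 := c d0 + 1)"
      have u1: "(\<Sum>d\<in>{d. d dvd n}. carmichael d * c' d) = carmichael d0 * c' d0 + (\<Sum>d\<in>{d. d dvd n} - {d0}. carmichael d * c' d)"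
        using fin d0 by (simp add: sum.remove)
      have u2: "(\<Sum>d\<in>{d. d dvd n}. carmichael d * c d) = carmichael d0 * c d0 + (\<Sum>d\<in>{d. d dvd n} - {d0}. carmichael d * c d)"
        using fin d0 by (simp add: sum.remove)
      have u3: "(\<Sum>d\<in>{d. d dvd n} - {d0}. carmichael d * c' d) = (\<Sum>d\<in>{d. d dvd n} - {d0}. carmichael d * c d)"
        by (rule sum.cong) (auto simp: c'_def)
      have "(\<Sum>d\<in>{d. d dvd n}. carmichael d * c' d) = (\<Sum>d\<in>{d. d dvd n}. carmichael d * c d) + carmichael d0"
        using u1 u2 u3 by (simp add: c'_def algebra_simps)
      hence "m = (\<Sum>d\<in>{d. d dvd n}. carmichael d * c' d)" using c(2) False Tge by linarith
      moreover have "\<forall>d. d dvd n \<longrightarrow> c' d \<le> b d"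
      proof (intro allI impI)
        fix d assume dd: "d dvd n"
        show "c' d \<le> b d"
        proof (cases "d = d0")
          case True thus ?thesis using c(1) dd bd by (simp add: c'_def)
        next
          case False
          have "c d \<le> b' d" using c(1) dd by blast
          thus ?thesis using False by (simp add: c'_def b'_def)
        qed
      qed
      ultimately show ?thesis by blast
    qed
  qed
qed

theorem corollary5p6:
  fixes n :: nat
  assumes "lambda_star_practical n"
  shows "lambda_practical n"
proof -
  have n: "n > 0" using assms unfolding lambda_star_practical_def by simp
  have star: "\<And>m. m \<le> (\<Sum>d\<in>{d. d dvd n}. carmichael d) \<Longrightarrow>
        (\<exists>D. D \<subseteq> {d. d dvd n} \<and> m = (\<Sum>d\<in>D. carmichael d))"
  proof -
    fix m assume m: "m \<le> (\<Sum>d\<in>{d. d dvd n}. carmichael d)"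
    show "\<exists>D. D \<subseteq> {d. d dvd n} \<and> m = (\<Sum>d\<in>D. carmichael d)"
    proof (cases "m = 0")
      case True thus ?thesis by (intro exI[of _ "{}"]) auto
    next
      case False thus ?thesis using assms m unfolding lambda_star_practical_def by auto
    qed
  qed
  define b where "b d = totient d div carmichael d" for d
  have pos: "d > 0" if "d dvd n" for d using n that by (auto intro: Nat.gr0I)
  have b1: "\<forall>d. d dvd n \<longrightarrow> 1 \<le> b d"
  proof (intro allI impI)
    fix d assume "d dvd n"
    hence d: "d > 0" using pos by blast
    have "carmichael d dvd totient d" "carmichael d > 0" "totient d > 0"
      using carm_dvd[OF d] carm_prop[OF d] d by auto
    thus "1 \<le> b d" unfolding b_def by (metis One_nat_def Suc_leI div_greater_zero_iff dvd_imp_le)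
  qed
  have tot: "(\<Sum>d\<in>{d. d dvd n}. carmichael d * b d) = n"
  proof -
    have "(\<Sum>d\<in>{d. d dvd n}. carmichael d * b d) = (\<Sum>d\<in>{d. d dvd n}. totient d)"
      by (rule sum.cong) (auto simp: b_def pos carm_dvd)
    thus ?thesis using totient_divisor_sum by simp
  qed

  show ?thesis unfolding lambda_practical_def
    using n main_ind[OF n star] b1 tot unfolding b_def by auto
qed

end
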